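(* Let $(X,d)$ be a compact geodesic metric space and let $f:X\to\mathbb{R}$ be Lipschitz. Then for every $(x,t)\in X\times(0,\infty)$ one has $|DQ_tf|(x)=\frac{D^+(x,t)}{t}$. Moreover, for every $x\in X$, \[ \frac{d}{dt}Q_tf(x)+\frac12|DQ_tf|^2(x)=0 \] for every $t\in(0,\infty)$ outside an at most countable set.
   Context: Hopf–Lax semigroup: for $t>0$, $Q_tf(x):=\min_{y\in X}F(t,x,y)$ with $F(t,x,y):=f(y)+\frac{d^2(x,y)}{2t}$, and $Q_0f:=f$. For $t>0$, $D^+(x,t):=\max d(x,y)$ and $D^-(x,t):=\min d(x,y)$, where $y$ ranges over the minimizers of $F(t,x,\cdot)$. Slope: $|Dg|(x):=\limsup_{y\to x}\frac{|g(y)-g(x)|}{d(y,x)}$. A metric space is geodesic if any two points $x,y$ are joined by a curve $\gamma:[0,1]\to X$ with $\gamma_0=x$, $\gamma_1=y$ and $d(\gamma_s,\gamma_t)=|t-s|d(x,y)$ for all $s,t$. *)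

theory Defs
  imports "HOL-Analysis.Analysis"
begin

text \<open>Geodesic metric space (the whole type is the space X).\<close>
definition geodesic_space :: "'a::metric_space itself \<Rightarrow> bool" where
  "geodesic_space _ \<longleftrightarrow>
     (\<forall>x y::'a. \<exists>\<gamma>::real \<Rightarrow> 'a. \<gamma> 0 = x \<and> \<gamma> 1 = y \<and>
        (\<forall>s\<in>{0..1}. \<forall>t\<in>{0..1}. dist (\<gamma> s) (\<gamma> t) = \<bar>t - s\<bar> * dist x y))"

text \<open>Hopf--Lax semigroup; for t>0 the minimum is attained on a compact space,
  so it coincides with the infimum.\<close>
definition hopf_lax :: "real \<Rightarrow> ('a::metric_space \<Rightarrow> real) \<Rightarrow> 'a \<Rightarrow> real" where
  "hopf_lax t f x = (if t = 0 then f x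
      else (INF y. f y + (dist x y)\<^sup>2 / (2 * t)))"

definition hl_minimizers :: "('a::metric_space \<Rightarrow> real) \<Rightarrow> real \<Rightarrow> 'a \<Rightarrow> 'a set" where
  "hl_minimizers f t x = {y. f y + (dist x y)\<^sup>2 / (2 * t) = hopf_lax t f x}"

definition Dplus :: "('a::metric_space \<Rightarrow> real) \<Rightarrow> 'a \<Rightarrow> real \<Rightarrow> real" where
  "Dplus f x t = Sup (dist x ` hl_minimizers f t x)"

definition Dminus :: "('a::metric_space \<Rightarrow> real) \<Rightarrow> 'a \<Rightarrow> real \<Rightarrow> real" where
  "Dminus f x t = Inf (dist x ` hl_minimizers f t x)"

text \<open>Slope (local Lipschitz constant), valued in extended reals;
  by convention 0 at isolated points.\<close>
definition slope :: "('a::metric_space \<Rightarrow> real) \<Rightarrow> 'a \<Rightarrow> ereal" where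
  "slope g x = (if at x = bot then 0
     else Limsup (at x) (\<lambda>y. ereal (\<bar>g y - g x\<bar> / dist y x)))"

end

theory Submission
  imports Defs
begin

lemma aux_q: "s > 0 \<Longrightarrow> t > 0 \<Longrightarrow> (d::real) / (2 * s) - d / (2 * t) = (- d / (2 * s * t)) * (s - t)"
  by (simp add: field_simps)

lemma aux_low:
  fixes D t s qg qx a :: real
  assumes D: "D > 0" and t: "t > 0" and s: "0 < s" "s < 1"
    and h1: "qg \<le> a + ((1 - s) * D)\<^sup>2 / (2 * t)" and h2: "qx = a + D\<^sup>2 / (2 * t)"
  shows "D * (2 - s) / (2 * t) \<le> \<bar>qg - qx\<bar> / (s * D)"
proof -
  have e: "s * D * (D * (2 - s) / (2 * t)) = D\<^sup>2 / (2 * t) - ((1 - s) * D)\<^sup>2 / (2 * t)"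
    using t by (simp add: field_simps power2_eq_square)
  have "s * D * (D * (2 - s) / (2 * t)) \<le> \<bar>qg - qx\<bar>" using e h1 h2 by linarith
  moreover have "s * D > 0" using s D by simp
  ultimately show ?thesis by (simp add: pos_le_divide_eq mult.commute)
qed

lemma aux_up:
  fixes r t e D a b c qz qx p p' :: real
  assumes r: "r > 0" and t: "t > 0" and re: "r < t * e" and D: "D \<ge> 0"
    and a: "0 \<le> a" "a \<le> D + r" and b: "0 \<le> b" "b \<le> r + c" and c: "0 \<le> c" "c \<le> D + t * e / 2"
    and h1: "qz \<le> p + a\<^sup>2 / (2 * t)" and h2: "qx = p + D\<^sup>2 / (2 * t)"
    and h3: "qx \<le> p' + b\<^sup>2 / (2 * t)" and h4: "qz = p' + c\<^sup>2 / (2 * t)"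
  shows "\<bar>qz - qx\<bar> / r \<le> D / t + e"
proof -
  have a2: "a\<^sup>2 \<le> (D + r)\<^sup>2" using a by (intro power_mono) auto
  have b2: "b\<^sup>2 \<le> (r + c)\<^sup>2" using b by (intro power_mono) auto
  have u1: "qz - qx \<le> ((D + r)\<^sup>2 - D\<^sup>2) / (2 * t)"
  proof -
    have "qz - qx \<le> (a\<^sup>2 - D\<^sup>2) / (2 * t)" using h1 h2 by (simp add: diff_divide_distrib)
    also have "\<dots> \<le> ((D + r)\<^sup>2 - D\<^sup>2) / (2 * t)" using a2 t by (intro divide_right_mono) auto
    finally show ?thesis .
  qed
  have u2: "qx - qz \<le> ((r + c)\<^sup>2 - c\<^sup>2) / (2 * t)"
  proof -
    have "qx - qz \<le> (b\<^sup>2 - c\<^sup>2) / (2 * t)" using h3 h4 by (simp add: diff_divide_distrib)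
    also have "\<dots> \<le> ((r + c)\<^sup>2 - c\<^sup>2) / (2 * t)" using b2 t by (intro divide_right_mono) auto
    finally show ?thesis .
  qed
  have v1: "((D + r)\<^sup>2 - D\<^sup>2) / (2 * t) = r * (D / t + r / (2 * t))"
    using t by (simp add: field_simps power2_eq_square)
  have v2: "((r + c)\<^sup>2 - c\<^sup>2) / (2 * t) = r * (c / t + r / (2 * t))"
    using t by (simp add: field_simps power2_eq_square)
  have w1: "r / (2 * t) \<le> e / 2" using re t by (simp add: field_simps)
  have w2: "c / t \<le> D / t + e / 2" using c t by (simp add: field_simps)
  have "0 < t * e" using r re by linarith
  then have "e > 0" using t by (simp add: zero_less_mult_iff)
  then have "D / t + r / (2 * t) \<le> D / t + e" "c / t + r / (2 * t) \<le> D / t + e" using w1 w2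
    by linarith+
  then have "r * (D / t + r / (2 * t)) \<le> r * (D / t + e)" "r * (c / t + r / (2 * t)) \<le> r * (D / t + e)"
    using r by (auto intro: mult_left_mono)
  then have "\<bar>qz - qx\<bar> \<le> r * (D / t + e)" using u1 u2 v1 v2 by linarith
  then show ?thesis using r by (simp add: pos_divide_le_eq mult.commute)
qed
lemma Limsup_le_filter: "F \<le> G \<Longrightarrow> Limsup F g \<le> Limsup G g"
  unfolding Limsup_def by (rule INF_superset_mono) (auto intro: filter_leD)

context
  fixes f :: "'a::metric_space \<Rightarrow> real"
  assumes cpt: "compact (UNIV::'a set)" and cont: "continuous_on UNIV f"
begin

lemma bddF: "t > 0 \<Longrightarrow> bdd_below (range (\<lambda>y. f y + (dist x y)\<^sup>2 / (2 * t)))"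
proof -
  assume t: "t > 0"
  have "compact (f ` UNIV)" using compact_continuous_image[OF cont cpt] .
  then have "bdd_below (f ` UNIV)" by (intro bounded_imp_bdd_below compact_imp_bounded)
  then obtain m where m: "\<And>y. m \<le> f y" by (auto simp: bdd_below_def)
  have "m \<le> f y + (dist x y)\<^sup>2 / (2 * t)" for y using m[of y] t by (simp add: add_increasing2)
  then show ?thesis by (auto simp: bdd_below_def)
qed

lemma hl_le: "t > 0 \<Longrightarrow> hopf_lax t f x \<le> f y + (dist x y)\<^sup>2 / (2 * t)"
  unfolding hopf_lax_def using bddF[of t x] by (auto intro: cINF_lower)

lemma hl_ge: "t > 0 \<Longrightarrow> (\<And>y. c \<le> f y + (dist x y)\<^sup>2 / (2 * t)) \<Longrightarrow> c \<le> hopf_lax t f x"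
  unfolding hopf_lax_def by (auto intro: cINF_greatest)

lemma min_iff: "t > 0 \<Longrightarrow> y \<in> hl_minimizers f t x \<longleftrightarrow> (\<forall>z. f y + (dist x y)\<^sup>2 / (2 * t) \<le> f z + (dist x z)\<^sup>2 / (2 * t))"
proof
  assume t: "t > 0" and "y \<in> hl_minimizers f t x"
  then have e: "hopf_lax t f x = f y + (dist x y)\<^sup>2 / (2 * t)" by (simp add: hl_minimizers_def)
  show "\<forall>z. f y + (dist x y)\<^sup>2 / (2 * t) \<le> f z + (dist x z)\<^sup>2 / (2 * t)"
    using hl_le[OF t] e by metis
next
  assume t: "t > 0" and h: "\<forall>z. f y + (dist x y)\<^sup>2 / (2 * t) \<le> f z + (dist x z)\<^sup>2 / (2 * t)"
  have "f y + (dist x y)\<^sup>2 / (2 * t) \<le> hopf_lax t f x" using h by (intro hl_ge[OF t]) auto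
  then show "y \<in> hl_minimizers f t x" using hl_le[OF t, of x y]
    by (simp add: hl_minimizers_def)
qed

lemma min_ex: "t > 0 \<Longrightarrow> \<exists>y. y \<in> hl_minimizers f t x"
proof -
  assume t: "t > 0"
  have "continuous_on UNIV (\<lambda>y. f y + (dist x y)\<^sup>2 / (2 * t))"
    using t by (intro continuous_intros cont) auto
  from continuous_attains_inf[OF cpt _ this] obtain y where
    "\<forall>z. f y + (dist x y)\<^sup>2 / (2 * t) \<le> f z + (dist x z)\<^sup>2 / (2 * t)" by auto
  then show ?thesis using min_iff[OF t] by blast
qed

lemma min_compact: "t > 0 \<Longrightarrow> compact (hl_minimizers f t x)"
proof -
  assume t: "t > 0"
  have "closed {y. f y + (dist x y)\<^sup>2 / (2 * t) = hopf_lax t f x}"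
    using t by (intro closed_Collect_eq continuous_intros cont) auto
  then have "compact (UNIV \<inter> {y. f y + (dist x y)\<^sup>2 / (2 * t) = hopf_lax t f x})"
    using cpt by (intro compact_Int_closed)
  then show ?thesis by (simp add: hl_minimizers_def)
qed

lemma dplus: "t > 0 \<Longrightarrow> \<exists>y\<in>hl_minimizers f t x. dist x y = Dplus f x t \<and>
   (\<forall>z\<in>hl_minimizers f t x. dist x z \<le> Dplus f x t)"
proof -
  assume t: "t > 0"
  have ne: "hl_minimizers f t x \<noteq> {}" using min_ex[OF t] by auto
  have "continuous_on (hl_minimizers f t x) (dist x)" by (intro continuous_intros)
  from continuous_attains_sup[OF min_compact[OF t] ne this] obtain y where
    y: "y \<in> hl_minimizers f t x" "\<forall>z\<in>hl_minimizers f t x. dist x z \<le> dist x y" by auto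
  have "Dplus f x t = dist x y" unfolding Dplus_def
    using y by (intro cSup_eq_maximum) auto
  then show ?thesis using y by auto
qed

lemma min_eq: "y \<in> hl_minimizers f t x \<Longrightarrow> hopf_lax t f x = f y + (dist x y)\<^sup>2 / (2 * t)"
  by (simp add: hl_minimizers_def)

lemma min_mono:
  assumes u: "0 < u" and us: "u < s" and y: "y \<in> hl_minimizers f u x" and z: "z \<in> hl_minimizers f s x"
  shows "dist x y \<le> dist x z"
proof -
  have s: "s > 0" using u us by simp
  have a: "hopf_lax s f x \<le> f y + (dist x y)\<^sup>2 / (2 * s)" using hl_le[OF s] .
  have b: "hopf_lax s f x = f z + (dist x z)\<^sup>2 / (2 * s)" using min_eq[OF z] .
  have c: "hopf_lax u f x \<le> f z + (dist x z)\<^sup>2 / (2 * u)" using hl_le[OF u] .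
  have d: "hopf_lax u f x = f y + (dist x y)\<^sup>2 / (2 * u)" using min_eq[OF y] .
  have e: "(dist x y)\<^sup>2 / (2 * u) - (dist x y)\<^sup>2 / (2 * s) \<le> (dist x z)\<^sup>2 / (2 * u) - (dist x z)\<^sup>2 / (2 * s)"
    using a b c d by linarith
  have e1: "(dist x y)\<^sup>2 / (2 * u) - (dist x y)\<^sup>2 / (2 * s) = (dist x y)\<^sup>2 * (1 / (2 * u) - 1 / (2 * s))"
    by (simp only: right_diff_distrib times_divide_eq_right mult_1_right)
  have e2: "(dist x z)\<^sup>2 / (2 * u) - (dist x z)\<^sup>2 / (2 * s) = (dist x z)\<^sup>2 * (1 / (2 * u) - 1 / (2 * s))"
    by (simp only: right_diff_distrib times_divide_eq_right mult_1_right)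
  have "1 / (2 * s) < 1 / (2 * u)" using u us by (intro divide_strict_left_mono) auto
  then have pos: "0 < 1 / (2 * u) - 1 / (2 * s)" by simp
  have "(dist x y)\<^sup>2 * (1 / (2 * u) - 1 / (2 * s)) \<le> (dist x z)\<^sup>2 * (1 / (2 * u) - 1 / (2 * s))"
    using e unfolding e1 e2 .
  then have "(dist x y)\<^sup>2 \<le> (dist x z)\<^sup>2"
    using pos by (rule mult_right_le_imp_le)
  then show ?thesis by (rule power2_le_imp_le) simp
qed

lemma quot_bounds:
  assumes s: "s > 0" and t: "t > 0" and st: "s \<noteq> t"
    and yt: "yt \<in> hl_minimizers f t x" and ys: "ys \<in> hl_minimizers f s x"
  defines "P \<equiv> (hopf_lax s f x - hopf_lax t f x) / (s - t)"
    and "A \<equiv> - (dist x yt)\<^sup>2 / (2 * s * t)" and "B \<equiv> - (dist x ys)\<^sup>2 / (2 * s * t)"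
  shows "(B \<le> P \<and> P \<le> A) \<or> (A \<le> P \<and> P \<le> B)"
proof -
  have u: "hopf_lax s f x - hopf_lax t f x \<le> (dist x yt)\<^sup>2 / (2 * s) - (dist x yt)\<^sup>2 / (2 * t)"
    using hl_le[OF s, of x yt] min_eq[OF yt] by linarith
  have l: "(dist x ys)\<^sup>2 / (2 * s) - (dist x ys)\<^sup>2 / (2 * t) \<le> hopf_lax s f x - hopf_lax t f x"
    using hl_le[OF t, of x ys] min_eq[OF ys] by linarith
  have nz: "s - t \<noteq> 0" using st by simp
  have pa: "hopf_lax s f x - hopf_lax t f x = P * (s - t)" using nz by (simp add: P_def)
  have aa: "(dist x yt)\<^sup>2 / (2 * s) - (dist x yt)\<^sup>2 / (2 * t) = A * (s - t)"
    unfolding A_def by (rule aux_q[OF s t])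
  have bb: "(dist x ys)\<^sup>2 / (2 * s) - (dist x ys)\<^sup>2 / (2 * t) = B * (s - t)"
    unfolding B_def by (rule aux_q[OF s t])
  have "B * (s - t) \<le> P * (s - t)" "P * (s - t) \<le> A * (s - t)" using u l pa aa bb by linarith+
  then show ?thesis using nz
    by (cases "s - t > 0") (auto simp: mult_le_cancel_right)
qed

lemma usc:
  assumes t: "t > 0" and eta: "\<eta> > 0"
  shows "eventually (\<lambda>z. \<forall>w\<in>hl_minimizers f t z. dist z w \<le> Dplus f x t + \<eta>) (nhds x)"
proof (rule ccontr)
  assume neg: "\<not> ?thesis"
  have "\<forall>n. \<exists>p. dist (fst p) x < inverse (real (Suc n)) \<and> snd p \<in> hl_minimizers f t (fst p) \<and> dist (fst p) (snd p) > Dplus f x t + \<eta>"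
  proof
    fix n
    show "\<exists>p. dist (fst p) x < inverse (real (Suc n)) \<and> snd p \<in> hl_minimizers f t (fst p) \<and> dist (fst p) (snd p) > Dplus f x t + \<eta>"
    proof (rule ccontr)
      assume h: "\<not> ?thesis"
      have "eventually (\<lambda>z. \<forall>w\<in>hl_minimizers f t z. dist z w \<le> Dplus f x t + \<eta>) (nhds x)"
        unfolding eventually_nhds_metric
      proof (intro exI[of _ "inverse (real (Suc n))"] conjI allI impI ballI)
        fix z w assume zw: "dist z x < inverse (real (Suc n))" "w \<in> hl_minimizers f t z"
        show "dist z w \<le> Dplus f x t + \<eta>"
        proof (rule ccontr)
          assume "\<not> dist z w \<le> Dplus f x t + \<eta>"
          then have "\<exists>p. dist (fst p) x < inverse (real (Suc n)) \<and> snd p \<in> hl_minimizers f t (fst p) \<and> dist (fst p) (snd p) > Dplus f x t + \<eta>"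
            using zw by (intro exI[of _ "(z, w)"]) simp
          with h show False by contradiction
        qed
      qed simp
      then show False using neg by contradiction
    qed
  qed
  from choice[OF this] obtain g where g: "\<forall>n. dist (fst (g n)) x < inverse (real (Suc n)) \<and> snd (g n) \<in> hl_minimizers f t (fst (g n)) \<and> dist (fst (g n)) (snd (g n)) > Dplus f x t + \<eta>"
    by blast
  define Z where "Z n = fst (g n)" for n
  define W where "W n = snd (g n)" for n
  have ZW: "\<And>n. dist (Z n) x < inverse (real (Suc n))"
    "\<And>n. W n \<in> hl_minimizers f t (Z n)" "\<And>n. dist (Z n) (W n) > Dplus f x t + \<eta>"
    using g by (simp_all add: Z_def W_def)
  have minW: "f (W n) + (dist (Z n) (W n))\<^sup>2 / (2 * t) \<le> f v + (dist (Z n) v)\<^sup>2 / (2 * t)" for n v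
    using ZW(2)[of n] min_iff[OF t, of "W n" "Z n"] by simp
  have Zl: "Z \<longlonglongrightarrow> x"
  proof -
    have "(\<lambda>n. dist (Z n) x) \<longlonglongrightarrow> 0"
    proof (rule tendsto_sandwich[OF _ _ tendsto_const LIMSEQ_inverse_real_of_nat])
      show "eventually (\<lambda>n. 0 \<le> dist (Z n) x) sequentially" by simp
      show "eventually (\<lambda>n. dist (Z n) x \<le> inverse (real (Suc n))) sequentially"
        by (rule always_eventually) (use ZW(1) less_imp_le in blast)
    qed
    then show ?thesis by (rule tendsto_dist_iff[THEN iffD2])
  qed
  from compact_imp_seq_compact[OF cpt] obtain l r where r: "strict_mono r" and Wl: "(W \<circ> r) \<longlonglongrightarrow> l"
    unfolding seq_compact_def by blast
  have Wl': "(\<lambda>n. W (r n)) \<longlonglongrightarrow> l" using Wl by (simp add: o_def)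
  have Zl': "(\<lambda>n. Z (r n)) \<longlonglongrightarrow> x" using LIMSEQ_subseq_LIMSEQ[OF Zl r] by (simp add: o_def)
  have fc: "\<And>p. isCont f p" using cont by (simp add: continuous_on_eq_continuous_at)
  have lim1: "(\<lambda>n. f (W (r n)) + (dist (Z (r n)) (W (r n)))\<^sup>2 / (2 * t)) \<longlonglongrightarrow> f l + (dist x l)\<^sup>2 / (2 * t)"
    by (intro tendsto_intros isCont_tendsto_compose[OF fc Wl'] Zl' Wl') (use t in simp)
  have "\<forall>v. f l + (dist x l)\<^sup>2 / (2 * t) \<le> f v + (dist x v)\<^sup>2 / (2 * t)"
  proof
    fix v
    have lim2: "(\<lambda>n. f v + (dist (Z (r n)) v)\<^sup>2 / (2 * t)) \<longlonglongrightarrow> f v + (dist x v)\<^sup>2 / (2 * t)"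
      by (intro tendsto_intros Zl') (use t in simp)
    show "f l + (dist x l)\<^sup>2 / (2 * t) \<le> f v + (dist x v)\<^sup>2 / (2 * t)"
      by (rule tendsto_le[OF trivial_limit_sequentially lim2 lim1])
         (rule always_eventually, rule allI, rule minW)
  qed
  then have lM: "l \<in> hl_minimizers f t x" using min_iff[OF t] by simp
  have "dist x l \<le> Dplus f x t" using dplus[OF t, of x] lM by blast
  moreover have "Dplus f x t + \<eta> \<le> dist x l"
    by (rule tendsto_le[OF trivial_limit_sequentially tendsto_dist[OF Zl' Wl'] tendsto_const])
       (rule always_eventually, rule allI, rule less_imp_le, rule ZW(3))
  ultimately show False using eta by linarith
qed

lemma slope_eq:
  assumes t: "t > 0" and geo: "geodesic_space TYPE('a)"
  shows "slope (hopf_lax t f) x = ereal (Dplus f x t / t)"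
proof -
  define D where "D = Dplus f x t"
  define Q where "Q = hopf_lax t f"
  define g where "g z = ereal (\<bar>Q z - Q x\<bar> / dist z x)" for z
  obtain ys where ys: "ys \<in> hl_minimizers f t x" "dist x ys = D"
    and Dmax: "\<And>z. z \<in> hl_minimizers f t x \<Longrightarrow> dist x z \<le> D"
    using dplus[OF t, of x] unfolding D_def by blast
  have D0: "D \<ge> 0" using ys(2) by (metis zero_le_dist)
  have lower: "at x \<noteq> bot \<and> ereal (D / t) \<le> Limsup (at x) g" if Dp: "D > 0"
  proof -
    obtain \<gamma> :: "real \<Rightarrow> 'a" where g0: "\<gamma> 0 = x" and g1: "\<gamma> 1 = ys"
      and gd: "\<forall>a\<in>{0..1}. \<forall>b\<in>{0..1}. dist (\<gamma> a) (\<gamma> b) = \<bar>b - a\<bar> * dist x ys"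
      using geo unfolding geodesic_space_def by blast
    have dg: "dist (\<gamma> s) x = s * D" if "0 \<le> s" "s \<le> 1" for s
      using gd[rule_format, of 0 s] that g0 ys(2) by (simp add: dist_commute)
    have dg1: "dist (\<gamma> s) ys = (1 - s) * D" if "0 \<le> s" "s \<le> 1" for s
      using gd[rule_format, of s 1] that g1 ys(2) by simp
    have ev01: "eventually (\<lambda>s. s \<in> {0<..<1}) (at_right (0::real))"
      by (rule eventually_at_right_real) simp
    have lim: "filterlim \<gamma> (at x) (at_right 0)"
    proof (rule filterlim_atI)
      have "((\<lambda>s. s * D) \<longlongrightarrow> 0 * D) (at_right 0)"
        by (intro tendsto_intros)
      then have "((\<lambda>s. s * D) \<longlongrightarrow> 0) (at_right 0)" by simp
      then have "((\<lambda>s. dist (\<gamma> s) x) \<longlongrightarrow> 0) (at_right 0)"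
        by (rule Lim_transform_eventually) (rule eventually_mono[OF ev01], simp add: dg)
      then show "(\<gamma> \<longlongrightarrow> x) (at_right 0)" by (rule tendsto_dist_iff[THEN iffD2])
      show "eventually (\<lambda>s. \<gamma> s \<noteq> x) (at_right 0)"
      proof (rule eventually_mono[OF ev01])
        fix s :: real assume s: "s \<in> {0<..<1}"
        then have "dist (\<gamma> s) x = s * D" using dg by simp
        moreover have "s * D > 0" using s Dp by simp
        ultimately show "\<gamma> s \<noteq> x" by auto
      qed
    qed
    have nb: "at x \<noteq> bot"
    proof
      assume "at x = bot"
      then have "filtermap \<gamma> (at_right (0::real)) = bot" using lim by (simp add: filterlim_def bot_unique)
      then show False by (simp add: filtermap_bot_iff)
    qed
    have pt: "ereal (D * (2 - s) / (2 * t)) \<le> g (\<gamma> s)" if s: "s \<in> {0<..<1}" for s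
    proof -
      have "D * (2 - s) / (2 * t) \<le> \<bar>Q (\<gamma> s) - Q x\<bar> / (s * D)"
      proof (rule aux_low[OF Dp t])
        show "0 < s" "s < 1" using s by auto
        show "Q (\<gamma> s) \<le> f ys + ((1 - s) * D)\<^sup>2 / (2 * t)"
          using hl_le[OF t, of "\<gamma> s" ys] dg1[of s] s unfolding Q_def by (simp add: dist_commute)
        show "Q x = f ys + D\<^sup>2 / (2 * t)" using min_eq[OF ys(1)] ys(2) unfolding Q_def by simp
      qed
      then show ?thesis using dg[of s] s unfolding g_def by simp
    qed
    have tl: "((\<lambda>s. ereal (D * (2 - s) / (2 * t))) \<longlongrightarrow> ereal (D * (2 - 0) / (2 * t))) (at_right 0)"
      by (intro tendsto_intros) (use t in simp)
    have "ereal (D / t) = Limsup (at_right (0::real)) (\<lambda>s. ereal (D * (2 - s) / (2 * t)))"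
      using lim_imp_Limsup[OF _ tl] t by simp
    also have "\<dots> \<le> Limsup (at_right 0) (\<lambda>s. g (\<gamma> s))"
      by (rule Limsup_mono) (rule eventually_mono[OF ev01 pt])
    also have "\<dots> \<le> Limsup (filtermap \<gamma> (at_right 0)) g" by (rule Limsup_filtermap_ge)
    also have "\<dots> \<le> Limsup (at x) g" using lim unfolding filterlim_def by (rule Limsup_le_filter)
    finally show ?thesis using nb by simp
  qed
  have upper: "Limsup (at x) g \<le> ereal (D / t)"
  proof (rule ereal_le_epsilon2)
    fix e :: real assume e: "e > 0"
    have ev1: "eventually (\<lambda>z. \<forall>w\<in>hl_minimizers f t z. dist z w \<le> D + t * e / 2) (nhds x)"
      unfolding D_def using usc[OF t, of "t * e / 2" x] t e by simp
    have ev2: "eventually (\<lambda>z. dist z x < t * e) (nhds x)"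
      unfolding eventually_nhds_metric using t e by (intro exI[of _ "t * e"]) simp
    have "eventually (\<lambda>z. g z \<le> ereal (D / t + e)) (at x)"
      unfolding eventually_at_filter
    proof (rule eventually_mono[OF eventually_conj[OF ev1 ev2]], intro impI)
      fix z assume h: "(\<forall>w\<in>hl_minimizers f t z. dist z w \<le> D + t * e / 2) \<and> dist z x < t * e"
        and zx: "z \<noteq> x"
      obtain w where w: "w \<in> hl_minimizers f t z" using min_ex[OF t] by blast
      have "\<bar>Q z - Q x\<bar> / dist z x \<le> D / t + e"
      proof (rule aux_up[where a = "dist z ys" and b = "dist x w" and c = "dist z w"])
        show "0 < dist z x" using zx by simp
        show "t > 0" by (rule t)
        show "dist z x < t * e" using h by simp
        show "0 \<le> D" by (rule D0)
        show "0 \<le> dist z ys" "0 \<le> dist x w" "0 \<le> dist z w" by simp_all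
        show "dist z ys \<le> D + dist z x" using dist_triangle[of z ys x] ys(2) by simp
        show "dist x w \<le> dist z x + dist z w" using dist_triangle[of x w z] by (simp add: dist_commute)
        show "dist z w \<le> D + t * e / 2" using h w by blast
        show "Q z \<le> f ys + (dist z ys)\<^sup>2 / (2 * t)" unfolding Q_def by (rule hl_le[OF t])
        show "Q x = f ys + D\<^sup>2 / (2 * t)" using min_eq[OF ys(1)] ys(2) unfolding Q_def by simp
        show "Q x \<le> f w + (dist x w)\<^sup>2 / (2 * t)" unfolding Q_def by (rule hl_le[OF t])
        show "Q z = f w + (dist z w)\<^sup>2 / (2 * t)" using min_eq[OF w] unfolding Q_def by simp
      qed
      then show "g z \<le> ereal (D / t + e)" unfolding g_def by simp
    qed
    then have "Limsup (at x) g \<le> ereal (D / t + e)" by (rule Limsup_bounded)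
    then show "Limsup (at x) g \<le> ereal (D / t) + ereal e" by simp
  qed
  show ?thesis
  proof (cases "at x = bot")
    case True
    then have "D = 0" using lower D0 by force
    then show ?thesis using True unfolding slope_def D_def by simp
  next
    case False
    have "ereal (D / t) \<le> Limsup (at x) g"
    proof (cases "D > 0")
      case True then show ?thesis using lower by blast
    next
      case False
      then have "D = 0" using D0 by simp
      then show ?thesis using \<open>at x \<noteq> bot\<close>
        by (intro le_Limsup) (auto simp: g_def)
    qed
    then have "Limsup (at x) g = ereal (D / t)" using upper by (rule antisym[rotated])
    then show ?thesis using False unfolding slope_def D_def g_def Q_def by simp
  qed
qed

lemma deriv_part:
  "\<exists>S::real set. countable S \<and> (\<forall>t>0. t \<notin> S \<longrightarrow>
     ((\<lambda>s. hopf_lax s f x) has_real_derivative (- (Dplus f x t)\<^sup>2 / (2 * t\<^sup>2))) (at t))"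
proof -
  define \<phi> where "\<phi> s = Dplus f x s" for s
  have mono: "mono_on {0<..} \<phi>"
  proof (rule mono_onI)
    fix u s :: real assume us: "u \<in> {0<..}" "s \<in> {0<..}" "u \<le> s"
    show "\<phi> u \<le> \<phi> s"
    proof (cases "u = s")
      case False
      then have "u < s" using us by simp
      obtain yu where yu: "yu \<in> hl_minimizers f u x" "dist x yu = \<phi> u"
        using dplus[of u x] us unfolding \<phi>_def by auto
      obtain ys where ys: "ys \<in> hl_minimizers f s x" "dist x ys \<le> \<phi> s"
        using dplus[of s x] us unfolding \<phi>_def by auto
      have "dist x yu \<le> dist x ys" using min_mono[OF _ \<open>u < s\<close> yu(1) ys(1)] us by simp
      then show ?thesis using yu ys by simp
    qed simp
  qed
  define S where "S = {a\<in>{0<..}. \<not> isCont \<phi> a}"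
  have cS: "countable S" unfolding S_def by (rule mono_on_ctble_discont_open[OF _ mono]) simp
  define ysel where "ysel s = (SOME y. y \<in> hl_minimizers f s x)" for s
  have ysel: "ysel s \<in> hl_minimizers f s x" if "s > 0" for s
    unfolding ysel_def using min_ex[OF that, of x] by (rule someI_ex)
  have "((\<lambda>s. hopf_lax s f x) has_real_derivative (- (\<phi> t)\<^sup>2 / (2 * t\<^sup>2))) (at t)"
    if t: "t > 0" and tS: "t \<notin> S" for t
  proof -
    have ic: "isCont \<phi> t" using t tS unfolding S_def by simp
    define \<delta> where "\<delta> = \<phi> t"
    obtain yt where yt: "yt \<in> hl_minimizers f t x" "dist x yt = \<delta>"
      using dplus[OF t, of x] unfolding \<delta>_def \<phi>_def by auto
    have dconv: "((\<lambda>s. dist x (ysel s)) \<longlongrightarrow> \<delta>) (at t)"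
      unfolding LIM_eq
    proof (intro allI impI)
      fix r :: real assume r: "r > 0"
      from ic r obtain \<eta>0 where \<eta>0: "\<eta>0 > 0"
        and h0: "\<And>u. u \<noteq> t \<Longrightarrow> norm (u - t) < \<eta>0 \<Longrightarrow> norm (\<phi> u - \<phi> t) < r"
        unfolding isCont_def LIM_eq by blast
      define \<eta> where "\<eta> = min \<eta>0 t"
      have \<eta>: "\<eta> > 0" "\<eta> \<le> \<eta>0" "\<eta> \<le> t" using \<eta>0 t by (auto simp: \<eta>_def)
      have h: "\<And>u. norm (u - t) < \<eta> \<Longrightarrow> \<bar>\<phi> u - \<delta>\<bar> < r"
      proof -
        fix u assume "norm (u - t) < \<eta>"
        then show "\<bar>\<phi> u - \<delta>\<bar> < r" using h0[of u] \<eta> r unfolding \<delta>_def by (cases "u = t") auto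
      qed
      show "\<exists>d>0. \<forall>s. s \<noteq> t \<and> norm (s - t) < d \<longrightarrow> norm (dist x (ysel s) - \<delta>) < r"
      proof (intro exI[of _ "\<eta> / 2"] conjI allI impI)
        show "\<eta> / 2 > 0" using \<eta> by simp
        fix s assume s: "s \<noteq> t \<and> norm (s - t) < \<eta> / 2"
        have sa: "\<bar>s - t\<bar> < \<eta> / 2" using s by simp
        have sp: "s > 0" using sa \<eta> by arith
        have up: "dist x (ysel s) \<le> \<phi> s" using dplus[OF sp, of x] ysel[OF sp] unfolding \<phi>_def by blast
        have "\<phi> s < \<delta> + r" using h[of s] s \<eta> by auto
        define u where "u = s - \<eta> / 4"
        have up0: "u > 0" "u < s" using sa \<eta> unfolding u_def by arith+
        have "norm (u - t) < \<eta>" using sa \<eta> unfolding u_def real_norm_def by arith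
        then have "\<phi> u > \<delta> - r" using h[of u] by auto
        obtain yu where yu: "yu \<in> hl_minimizers f u x" "dist x yu = \<phi> u"
          using dplus[OF up0(1), of x] unfolding \<phi>_def by auto
        have "dist x yu \<le> dist x (ysel s)" by (rule min_mono[OF up0 yu(1) ysel[OF sp]])
        show "norm (dist x (ysel s) - \<delta>) < r"
          using \<open>\<phi> s < \<delta> + r\<close> \<open>\<phi> u > \<delta> - r\<close> up yu \<open>dist x yu \<le> dist x (ysel s)\<close> by auto
      qed
    qed
    define L where "L = - \<delta>\<^sup>2 / (2 * t * t)"
    define A where "A s = - (dist x yt)\<^sup>2 / (2 * s * t)" for s
    define B where "B s = - (dist x (ysel s))\<^sup>2 / (2 * s * t)" for s
    define P where "P s = (hopf_lax s f x - hopf_lax t f x) / (s - t)" for s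
    have limA: "(A \<longlongrightarrow> L) (at t)" unfolding A_def L_def yt(2)
      by (intro tendsto_intros) (use t in simp)
    have limB: "(B \<longlongrightarrow> L) (at t)" unfolding B_def L_def
      by (intro tendsto_intros dconv) (use t in simp)
    have g0: "((\<lambda>s. \<bar>A s - L\<bar> + \<bar>B s - L\<bar>) \<longlongrightarrow> 0) (at t)"
    proof -
      have "((\<lambda>s. A s - L) \<longlongrightarrow> 0) (at t)" "((\<lambda>s. B s - L) \<longlongrightarrow> 0) (at t)"
        using tendsto_diff[OF limA tendsto_const[of L]] tendsto_diff[OF limB tendsto_const[of L]] by simp_all
      then show ?thesis using tendsto_add_zero tendsto_rabs_zero by blast
    qed
    have ev: "eventually (\<lambda>s. norm (P s - L) \<le> \<bar>A s - L\<bar> + \<bar>B s - L\<bar>) (at t)"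
      unfolding eventually_at
    proof (intro exI[of _ t] conjI ballI impI)
      show "t > 0" by (rule t)
      fix s :: real assume s: "s \<noteq> t \<and> dist s t < t"
      then have sp: "s > 0" by (auto simp: dist_real_def)
      have "(B s \<le> P s \<and> P s \<le> A s) \<or> (A s \<le> P s \<and> P s \<le> B s)"
        unfolding A_def B_def P_def using s by (intro quot_bounds[OF sp t _ yt(1) ysel[OF sp]]) auto
      then show "norm (P s - L) \<le> \<bar>A s - L\<bar> + \<bar>B s - L\<bar>" by auto
    qed
    have "(P \<longlongrightarrow> L) (at t)"
      by (rule LIM_zero_cancel, rule Lim_null_comparison[OF ev g0])
    then have "((\<lambda>s. hopf_lax s f x) has_real_derivative L) (at t)"
      unfolding has_field_derivative_iff P_def .
    moreover have "L = - (\<phi> t)\<^sup>2 / (2 * t\<^sup>2)" unfolding L_def \<delta>_def by (simp add: power2_eq_square)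
    ultimately show ?thesis by simp
  qed
  then show ?thesis using cS unfolding \<phi>_def by blast
qed

end

theorem mainTheorem2:
  fixes f :: "'a::metric_space \<Rightarrow> real"
  assumes "compact (UNIV :: 'a set)"
    and "geodesic_space TYPE('a)"
    and "\<exists>L. L-lipschitz_on UNIV f"
  shows "(\<forall>x. \<forall>t>0. slope (hopf_lax t f) x = ereal (Dplus f x t / t))
       \<and> (\<forall>x. \<exists>S::real set. countable S \<and>
            (\<forall>t>0. t \<notin> S \<longrightarrow>
              (\<exists>D. ((\<lambda>s. hopf_lax s f x) has_real_derivative D) (at t) \<and>
                   ereal D + (1/2) * (slope (hopf_lax t f) x)\<^sup>2 = 0)))"
proof -
  obtain L where "L-lipschitz_on UNIV f" using assms(3) by blast
  then have cont: "continuous_on UNIV f" by (rule lipschitz_on_continuous_on)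
  have sl: "\<And>x t. t > 0 \<Longrightarrow> slope (hopf_lax t f) x = ereal (Dplus f x t / t)"
    using slope_eq[OF assms(1) cont _ assms(2)] by blast
  show ?thesis
  proof (intro conjI allI impI)
    fix x t :: _ assume "(t::real) > 0"
    then show "slope (hopf_lax t f) x = ereal (Dplus f x t / t)" by (rule sl)
  next
    fix x
    obtain S :: "real set" where S: "countable S" and
      d: "\<And>t. t > 0 \<Longrightarrow> t \<notin> S \<Longrightarrow>
        ((\<lambda>s. hopf_lax s f x) has_real_derivative (- (Dplus f x t)\<^sup>2 / (2 * t\<^sup>2))) (at t)"
      using deriv_part[OF assms(1) cont, of x] by blast
    show "\<exists>S::real set. countable S \<and>
            (\<forall>t>0. t \<notin> S \<longrightarrow>
              (\<exists>D. ((\<lambda>s. hopf_lax s f x) has_real_derivative D) (at t) \<and>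
                   ereal D + (1/2) * (slope (hopf_lax t f) x)\<^sup>2 = 0))"
    proof (intro exI[of _ S] conjI allI impI S)
      fix t :: real assume t: "t > 0" "t \<notin> S"
      have e: "ereal (- (Dplus f x t)\<^sup>2 / (2 * t\<^sup>2)) + (1/2) * (ereal (Dplus f x t / t))\<^sup>2 = 0"
      proof -
        have "(1/2) * (ereal (Dplus f x t / t))\<^sup>2 = ereal ((Dplus f x t)\<^sup>2 / (2 * t\<^sup>2))"
          by (simp add: power2_eq_square power_divide)
        then show ?thesis by simp
      qed
      show "\<exists>D. ((\<lambda>s. hopf_lax s f x) has_real_derivative D) (at t) \<and>
                   ereal D + (1/2) * (slope (hopf_lax t f) x)\<^sup>2 = 0"
        using d[OF t] e sl[OF t(1)] by auto
    qed
  qed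
qed

end
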